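(* Let $\tau\in\mathcal{L}$ and $a\in\mathbb{R}$. Then $\mathcal{N}_\tau(a)\neq\mathcal{N}_\eta(a)$ if and only if every set in $\mathcal{N}_\tau(a)$ is an unbounded subset of $\mathbb{R}$.
   Context: $\eta$ denotes the Euclidean topology on $\mathbb{R}$. $\mathcal{L}$ denotes the family of all Hausdorff topologies $\tau$ on $\mathbb{R}$ with $\tau\subset\eta$. $\mathcal{N}_\tau(a)$ denotes the filter of neighborhoods of $a$ in $(\mathbb{R},\tau)$. *)

theory Defs
  imports "HOL-Analysis.Analysis"
begin

text \<open>The family L: Hausdorff topologies on the reals (with carrier all of R)
  that are coarser than the Euclidean topology.\<close>
definition coarser_Hausdorff :: "real topology \<Rightarrow> bool" where
  "coarser_Hausdorff \<tau> \<longleftrightarrow>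
     topspace \<tau> = UNIV \<and> Hausdorff_space \<tau> \<and> (\<forall>S. openin \<tau> S \<longrightarrow> open S)"

definition nbhds :: "'a topology \<Rightarrow> 'a \<Rightarrow> 'a set set" where
  "nbhds X a = {N. \<exists>U. openin X U \<and> a \<in> U \<and> U \<subseteq> N}"

end

theory Submission
  imports Defs
begin

theorem proposition1:
  fixes \<tau> :: "real topology" and a :: real
  assumes "coarser_Hausdorff \<tau>"
  shows "nbhds \<tau> a \<noteq> nbhds euclidean a \<longleftrightarrow> (\<forall>N \<in> nbhds \<tau> a. \<not> bounded N)"
proof
  have top: "topspace \<tau> = UNIV" and H: "Hausdorff_space \<tau>" and op: "\<And>S. openin \<tau> S \<Longrightarrow> open S"
    using assms unfolding coarser_Hausdorff_def by auto
  have cm: "continuous_map euclidean \<tau> id"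
    unfolding continuous_map_def by (simp add: top op)
  show "nbhds \<tau> a \<noteq> nbhds euclidean a \<Longrightarrow> \<forall>N \<in> nbhds \<tau> a. \<not> bounded N"
  proof (rule ccontr)
    assume ne: "nbhds \<tau> a \<noteq> nbhds euclidean a" and "\<not> (\<forall>N \<in> nbhds \<tau> a. \<not> bounded N)"
    then obtain N where N: "N \<in> nbhds \<tau> a" "bounded N" by auto
    then obtain U where U: "openin \<tau> U" "a \<in> U" "U \<subseteq> N" unfolding nbhds_def by auto
    have bU: "bounded U" using U N bounded_subset by blast
    have "nbhds \<tau> a = nbhds euclidean a"
    proof
      show "nbhds \<tau> a \<subseteq> nbhds euclidean a" unfolding nbhds_def using op by auto
    next
      show "nbhds euclidean a \<subseteq> nbhds \<tau> a"
      proof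
        fix M assume "M \<in> nbhds euclidean a"
        then obtain W where W: "open W" "a \<in> W" "W \<subseteq> M" unfolding nbhds_def by auto
        then obtain e where e: "e > 0" "ball a e \<subseteq> W" using open_contains_ball by blast
        define C where "C = closure U - ball a e"
        have "compact C" unfolding C_def
          using bU by (simp add: Diff_eq compact_Int_closed compact_closure open_ball closed_Compl)
        then have "compactin \<tau> (id ` C)"
          using image_compactin[OF _ cm] compactin_euclidean_iff by blast
        then have "closedin \<tau> C" using compactin_imp_closedin[OF H] by simp
        then have "openin \<tau> (U - C)" using U(1) by (simp add: openin_diff)
        moreover have "a \<in> U - C" using U e unfolding C_def by auto
        moreover have "U - C \<subseteq> M" using W e closure_subset unfolding C_def by blast
        ultimately show "M \<in> nbhds \<tau> a" unfolding nbhds_def by blast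
      qed
    qed
    with ne show False by simp
  qed
next
  assume all: "\<forall>N \<in> nbhds \<tau> a. \<not> bounded N"
  have "ball a 1 \<in> nbhds euclidean a" unfolding nbhds_def by (intro CollectI exI[of _ "ball a 1"]) auto
  moreover have "ball a 1 \<notin> nbhds \<tau> a" using all by auto
  ultimately show "nbhds \<tau> a \<noteq> nbhds euclidean a" by blast
qed

end
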